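(* In the $q$-shuffle algebra $\mathbb V$, the following three subalgebras coincide: (i) the subalgebra generated by $\{C_n\}_{n=1}^\infty$; (ii) the subalgebra generated by $\{D_n\}_{n=1}^\infty$; (iii) the subalgebra generated by $\{\tilde G_n\}_{n=1}^\infty$.
   Context: Let $\mathbb F$ be a field and let $q\in\mathbb F$ be nonzero and not a root of unity. Let $[m]_q=(q^m-q^{-m})/(q-q^{-1})$. Let $\mathbb V$ be the free associative $\mathbb F$-algebra on noncommuting $x,y$, with basis the words (including $1$). Juxtaposition denotes concatenation. Set $\langle x,x\rangle=\langle y,y\rangle=2$ and $\langle x,y\rangle=\langle y,x\rangle=-2$. The $q$-shuffle product $\star$ is the bilinear product determined as follows: - $1\star v=v\star 1=v$; - for nontrivial words $u=u_1\cdots u_r$ and $v=v_1\cdots v_s$, $$u\star v=u_1((u_2\cdots u_r)\star v)+v_1(u\star(v_2\cdots v_s))q^{\langle u_1,v_1\rangle+\cdots+\langle u_r,v_1\rangle}.$$ This makes $\mathbb V$ an associative algebra, the $q$-shuffle algebra. Subalgebras are taken with respect to $\star$. For $k\in\mathbb N$, let $\tilde G_k=xyxy\cdots xy$ be the word of length $2k$, with $\tilde G_0=1$. Define $D_0=1$ and, for $n\ge1$, define $D_n$ recursively by $\sum_{i=0}^n D_i\star\tilde G_{n-i}=0$. Let $\overline x=1$ and $\overline y=-1$. A word $v_1\cdots v_m$ is Catalan if $\overline v_1+\cdots+\overline v_i\ge0$ for $1\le i\le m-1$ and $\overline v_1+\cdots+\overline v_m=0$. For $n\in\mathbb N$, $$C_n=\sum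 v_1\cdots v_{2n}\,[1]_q[1+\overline v_1]_q\cdots[1+\overline v_1+\cdots+\overline v_{2n}]_q,$$ where the sum is over Catalan words of length $2n$. *)

theory Defs
  imports Main
begin

datatype letter = X | Y

type_synonym word = "letter list"

text \<open>Elements of the free algebra V over a field 'a are represented as
  functions from words to coefficients (finitely supported in practice).\<close>
type_synonym 'a vect = "word \<Rightarrow> 'a"

definition wd :: "word \<Rightarrow> 'a::field vect" where
  "wd u = (\<lambda>w. if w = u then 1 else 0)"

definition pair :: "letter \<Rightarrow> letter \<Rightarrow> int" where
  "pair a b = (if a = b then 2 else -2)"

definition bar :: "letter \<Rightarrow> int" where
  "bar a = (if a = X then 1 else -1)"

fun qsh :: "'a::field \<Rightarrow> word \<Rightarrow> word \<Rightarrow> 'a vect" where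
  "qsh q [] v = wd v"
| "qsh q (a # u) [] = wd (a # u)"
| "qsh q (a # u) (b # v) =
     (\<lambda>w. case w of [] \<Rightarrow> 0
        | c # w' \<Rightarrow> (if c = a then qsh q u (b # v) w' else 0)
                  + (if c = b then q powi (\<Sum>l\<leftarrow>a # u. pair l b) * qsh q (a # u) v w' else 0))"

definition shuf :: "'a::field \<Rightarrow> 'a vect \<Rightarrow> 'a vect \<Rightarrow> 'a vect" where
  "shuf q f g = (\<lambda>w. \<Sum>u\<in>{u. f u \<noteq> 0}. \<Sum>v\<in>{v. g v \<noteq> 0}. f u * g v * qsh q u v w)"

inductive_set gen_subalg :: "'a::field \<Rightarrow> 'a vect set \<Rightarrow> 'a vect set"
  for q :: 'a and S :: "'a vect set" where
  one: "wd [] \<in> gen_subalg q S"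
| base: "s \<in> S \<Longrightarrow> s \<in> gen_subalg q S"
| add: "f \<in> gen_subalg q S \<Longrightarrow> g \<in> gen_subalg q S \<Longrightarrow> (\<lambda>w. f w + g w) \<in> gen_subalg q S"
| smult: "f \<in> gen_subalg q S \<Longrightarrow> (\<lambda>w. c * f w) \<in> gen_subalg q S"
| mult: "f \<in> gen_subalg q S \<Longrightarrow> g \<in> gen_subalg q S \<Longrightarrow> shuf q f g \<in> gen_subalg q S"

definition Gt :: "nat \<Rightarrow> 'a::field vect" where
  "Gt k = wd (concat (replicate k [X, Y]))"

text \<open>D_0 = 1, and \<Sum>_{i=0}^n D_i \<star> \<tilde>G_{n-i} = 0 for n \<ge> 1 (using \<tilde>G_0 = 1).\<close>
function Dn :: "'a::field \<Rightarrow> nat \<Rightarrow> 'a vect" where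
  "Dn q n = (if n = 0 then wd []
             else (\<lambda>w. - (\<Sum>i\<in>{..<n}. shuf q (Dn q i) (Gt (n - i)) w)))"
  by auto
termination
  by (relation "measure (\<lambda>(q, n). n)") auto

definition qint :: "'a::field \<Rightarrow> int \<Rightarrow> 'a" where
  "qint q m = (q powi m - q powi (-m)) / (q - inverse q)"

definition hsum :: "word \<Rightarrow> nat \<Rightarrow> int" where
  "hsum w i = (\<Sum>j<i. bar (w ! j))"

definition catalan :: "word \<Rightarrow> bool" where
  "catalan w \<longleftrightarrow> (\<forall>i. 1 \<le> i \<and> i \<le> length w - 1 \<longrightarrow> hsum w i \<ge> 0) \<and> hsum w (length w) = 0"

definition Cn :: "'a::field \<Rightarrow> nat \<Rightarrow> 'a vect" where
  "Cn q n = (\<lambda>w. if length w = 2 * n \<and> catalan w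
                 then (\<Prod>i\<in>{0..2 * n}. qint q (1 + hsum w i)) else 0)"

end

theory Submission
  imports Defs
begin



declare Dn.simps[simp del]

definition ht :: "word \<Rightarrow> int" where "ht u = (\<Sum>l\<leftarrow>u. bar l)"

fun PW :: "(int \<Rightarrow> int \<Rightarrow> 'a::field) \<Rightarrow> int \<Rightarrow> word \<Rightarrow> 'a" where
  "PW om a [] = 1"
| "PW om a (c # u) = om a (a + bar c) * PW om (a + bar c) u"

definition FW :: "(int \<Rightarrow> int \<Rightarrow> 'a::field) \<Rightarrow> int \<Rightarrow> word \<Rightarrow> 'a" where
  "FW om a u = (if a + ht u = 0 then PW om a u else 0)"

definition xyw :: "nat \<Rightarrow> word" where "xyw j = concat (replicate j [X, Y])"
definition vb :: "bool \<Rightarrow> nat \<Rightarrow> word" where "vb b j = (if b then Y # xyw j else xyw j)"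
definition Ws :: "nat \<Rightarrow> word set" where "Ws N = {u. length u \<le> N}"

definition TT :: "'a::field \<Rightarrow> (int \<Rightarrow> int \<Rightarrow> 'a) \<Rightarrow> 'a \<Rightarrow> nat \<Rightarrow> nat \<Rightarrow> int \<Rightarrow> bool \<Rightarrow> word \<Rightarrow> 'a" where
  "TT q om \<alpha> N M a b s = (\<Sum>u\<in>Ws N. \<Sum>j\<le>M. \<alpha> ^ j * FW om a u * qsh q u (vb b j) s)"

lemma ht_simps[simp]: "ht [] = 0" "ht (c # u) = bar c + ht u" "ht (u @ v) = ht u + ht v"
  by (simp_all add: ht_def)

lemma bar_simps[simp]: "bar X = 1" "bar Y = -1" by (simp_all add: bar_def)

lemma UNIV_letter: "(UNIV :: letter set) = {X, Y}" using letter.exhaust by auto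

lemma finite_len_le[simp]: "finite {u::word. length u \<le> N}"
proof -
  have "finite {xs. set xs \<subseteq> (UNIV::letter set) \<and> length xs \<le> N}"
    by (rule finite_lists_length_le) (simp add: UNIV_letter)
  thus ?thesis by simp
qed

lemma finite_Ws[simp]: "finite (Ws N)" by (simp add: Ws_def)

lemma len_xyw[simp]: "length (xyw j) = 2 * j"
  by (induction j) (auto simp: xyw_def)

lemma xyw_0[simp]: "xyw 0 = []" and xyw_Suc: "xyw (Suc j) = X # Y # xyw j"
  by (simp_all add: xyw_def)

lemma qsh_Nil_right: "qsh q u v [] = (if u = [] \<and> v = [] then 1 else 0)"
  by (cases u; cases v) (auto simp: wd_def)

lemma qsh_u_Nil: "qsh q u [] = wd u" by (cases u) auto

lemma qsh_Cons: "qsh q u v (c # s) =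
  (case u of [] \<Rightarrow> 0 | a # u' \<Rightarrow> if a = c then qsh q u' v s else 0) +
  (case v of [] \<Rightarrow> 0 | b # v' \<Rightarrow> if b = c then q powi (\<Sum>l\<leftarrow>u. pair l c) * qsh q u v' s else 0)"
  by (cases u; cases v) (auto simp: wd_def qsh_u_Nil)

lemma qsh_len: "qsh q u v s \<noteq> 0 \<Longrightarrow> length s = length u + length v"
proof (induction s arbitrary: u v)
  case Nil thus ?case by (auto simp: qsh_Nil_right split: if_splits)
next
  case (Cons c s)
  show ?case
  proof (cases "(case u of [] \<Rightarrow> 0 | a # u' \<Rightarrow> if a = c then qsh q u' v s else 0) \<noteq> 0")
    case True thus ?thesis using Cons.IH by (auto split: list.splits if_splits)
  next
    case False
    hence "(case v of [] \<Rightarrow> 0 | b # v' \<Rightarrow> if b = c then q powi (\<Sum>l\<leftarrow>u. pair l c) * qsh q u v' s else 0) \<noteq> 0"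
      using Cons.prems by (simp add: qsh_Cons)
    thus ?thesis using Cons.IH by (auto split: list.splits if_splits)
  qed
qed

lemma FW_Nil[simp]: "FW om a [] = (if a = 0 then 1 else 0)" by (simp add: FW_def)

lemma FW_Cons: "FW om a (c # u) = om a (a + bar c) * FW om (a + bar c) u"
  by (simp add: FW_def add.assoc)

lemma pair_sum: "(\<Sum>l\<leftarrow>u. pair l c) = 2 * bar c * ht u"
proof (induction u)
  case Nil thus ?case by simp
next
  case (Cons a u)
  have "pair a c = 2 * bar c * bar a" by (cases a; cases c) (auto simp: pair_def)
  with Cons show ?case by (simp add: algebra_simps)
qed

lemma FW_powi: "FW om a u * q powi (\<Sum>l\<leftarrow>u. pair l c) = FW om a u * q powi (- 2 * a * bar c)"
proof (cases "a + ht u = 0")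
  case True
  hence "ht u = - a" by simp
  hence "(\<Sum>l\<leftarrow>u. pair l c) = - 2 * a * bar c" by (simp add: pair_sum)
  thus ?thesis by simp
qed (simp add: FW_def)

lemma TT_Nil: "TT q om \<alpha> N M a b [] = (if \<not> b \<and> a = 0 then 1 else 0)"
proof -
  have "\<And>u. (\<Sum>j\<le>M. \<alpha> ^ j * FW om a u * qsh q u (vb b j) []) = (\<Sum>j\<le>M. if j = 0 then (if u = [] \<and> \<not> b then FW om a [] else 0) else 0)"
    by (rule sum.cong) (auto simp: qsh_Nil_right vb_def xyw_def)
  hence "TT q om \<alpha> N M a b [] = (\<Sum>u\<in>Ws N. if u = [] then (if \<not> b then FW om a [] else 0) else 0)"
    unfolding TT_def by (auto intro!: sum.cong)
  also have "\<dots> = (if \<not> b then FW om a [] else 0)"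
    by (subst sum.delta) (auto simp: Ws_def)
  finally show ?thesis by simp
qed

lemma sum_Ws_Cons:
  assumes "N \<ge> 1"
  shows "(\<Sum>u\<in>Ws N. (case u of [] \<Rightarrow> 0 | a # u' \<Rightarrow> if a = c then g u' else 0)) = (\<Sum>u\<in>Ws (N - 1). g u)"
proof -
  have "(\<Sum>u\<in>Ws N. (case u of [] \<Rightarrow> 0 | a # u' \<Rightarrow> if a = c then g u' else 0))
      = (\<Sum>u\<in>(Cons c) ` Ws (N - 1). (case u of [] \<Rightarrow> 0 | a # u' \<Rightarrow> if a = c then g u' else 0))"
    by (rule sum.mono_neutral_right) (use assms in \<open>auto simp: Ws_def split: list.splits\<close>)
  also have "\<dots> = (\<Sum>u\<in>Ws (N - 1). g u)"
    by (subst sum.reindex) (auto simp: inj_on_def)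
  finally show ?thesis .
qed

lemma TT_Cons:
  assumes "N \<ge> 1" "M \<ge> 1"
  shows "TT q om \<alpha> N M a b (c # s) = om a (a + bar c) * TT q om \<alpha> (N - 1) M (a + bar c) b s
     + (if \<not> b \<and> c = X then \<alpha> * q powi (- 2 * a) * TT q om \<alpha> N (M - 1) a True s else 0)
     + (if b \<and> c = Y then q powi (2 * a) * TT q om \<alpha> N M a False s else 0)"
proof -
  define P1 where "P1 u j = (case u of [] \<Rightarrow> 0 | a' # u' \<Rightarrow> if a' = c then qsh q u' (vb b j) s else 0)" for u j
  define P2 where "P2 u j = (case vb b j of [] \<Rightarrow> 0 | b' # v' \<Rightarrow> if b' = c then q powi (\<Sum>l\<leftarrow>u. pair l c) * qsh q u v' s else 0)" for u j
  have "TT q om \<alpha> N M a b (c # s) = (\<Sum>u\<in>Ws N. \<Sum>j\<le>M. \<alpha> ^ j * FW om a u * P1 u j) + (\<Sum>u\<in>Ws N. \<Sum>j\<le>M. \<alpha> ^ j * FW om a u * P2 u j)"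
    unfolding TT_def qsh_Cons P1_def P2_def by (simp add: algebra_simps sum.distrib)
  also have "(\<Sum>u\<in>Ws N. \<Sum>j\<le>M. \<alpha> ^ j * FW om a u * P1 u j) = om a (a + bar c) * TT q om \<alpha> (N - 1) M (a + bar c) b s"
  proof -
    have "(\<Sum>j\<le>M. \<alpha> ^ j * FW om a u * P1 u j) = (case u of [] \<Rightarrow> 0 | a' # u' \<Rightarrow> if a' = c then om a (a + bar c) * (\<Sum>j\<le>M. \<alpha> ^ j * FW om (a + bar c) u' * qsh q u' (vb b j) s) else 0)" for u
      by (cases u) (auto simp: P1_def FW_Cons sum_distrib_left algebra_simps)
    hence "(\<Sum>u\<in>Ws N. \<Sum>j\<le>M. \<alpha> ^ j * FW om a u * P1 u j) = (\<Sum>u\<in>Ws (N-1). om a (a + bar c) * (\<Sum>j\<le>M. \<alpha> ^ j * FW om (a + bar c) u * qsh q u (vb b j) s))"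
      using sum_Ws_Cons[OF assms(1)] by simp
    thus ?thesis by (simp add: TT_def sum_distrib_left)
  qed
  also have "(\<Sum>u\<in>Ws N. \<Sum>j\<le>M. \<alpha> ^ j * FW om a u * P2 u j) = (if \<not> b \<and> c = X then \<alpha> * q powi (- 2 * a) * TT q om \<alpha> N (M - 1) a True s else 0) + (if b \<and> c = Y then q powi (2 * a) * TT q om \<alpha> N M a False s else 0)"
  proof (cases b)
    case True
    have "\<alpha> ^ j * FW om a u * P2 u j = (if c = Y then q powi (2 * a) * (\<alpha> ^ j * FW om a u * qsh q u (vb False j) s) else 0)" for u j
    proof (cases "c = Y")
      case True
      have "\<alpha> ^ j * FW om a u * P2 u j = \<alpha> ^ j * (FW om a u * q powi (\<Sum>l\<leftarrow>u. pair l c)) * qsh q u (vb False j) s"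
        using \<open>b\<close> True by (simp add: P2_def vb_def)
      also have "\<dots> = \<alpha> ^ j * (FW om a u * q powi (- 2 * a * bar c)) * qsh q u (vb False j) s"
        by (simp only: FW_powi)
      finally show ?thesis using True by simp
    next
      case False
      thus ?thesis using \<open>b\<close> by (simp add: P2_def vb_def)
    qed
    hence "(\<Sum>u\<in>Ws N. \<Sum>j\<le>M. \<alpha> ^ j * FW om a u * P2 u j) = (if c = Y then q powi (2 * a) * TT q om \<alpha> N M a False s else 0)"
      by (simp add: TT_def sum_distrib_left)
    thus ?thesis using True by simp
  next
    case False
    obtain M' where M': "M = Suc M'" using assms(2) by (cases M) auto
    have P20: "P2 u 0 = 0" for u using False by (simp add: P2_def vb_def)
    have "\<alpha> ^ Suc j * FW om a u * P2 u (Suc j) = (if c = X then \<alpha> * q powi (- 2 * a) * (\<alpha> ^ j * FW om a u * qsh q u (vb True j) s) else 0)" for u j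
    proof (cases "c = X")
      case True
      have "\<alpha> ^ Suc j * FW om a u * P2 u (Suc j) = \<alpha> * \<alpha> ^ j * (FW om a u * q powi (\<Sum>l\<leftarrow>u. pair l c)) * qsh q u (vb True j) s"
        using \<open>\<not> b\<close> True by (simp add: P2_def vb_def xyw_Suc)
      also have "\<dots> = \<alpha> * \<alpha> ^ j * (FW om a u * q powi (- 2 * a * bar c)) * qsh q u (vb True j) s"
        by (simp only: FW_powi)
      finally show ?thesis using True by simp
    next
      case False
      thus ?thesis using \<open>\<not> b\<close> by (simp add: P2_def vb_def xyw_Suc)
    qed
    hence "(\<Sum>j\<le>M. \<alpha> ^ j * FW om a u * P2 u j) = (if c = X then \<alpha> * q powi (- 2 * a) * (\<Sum>j\<le>M'. \<alpha> ^ j * FW om a u * qsh q u (vb True j) s) else 0)" for u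
      unfolding M' sum.atMost_Suc_shift by (simp add: P20 sum_distrib_left)
    hence "(\<Sum>u\<in>Ws N. \<Sum>j\<le>M. \<alpha> ^ j * FW om a u * P2 u j) = (if c = X then \<alpha> * q powi (- 2 * a) * TT q om \<alpha> N M' a True s else 0)"
      by (simp add: TT_def sum_distrib_left)
    thus ?thesis using False M' by simp
  qed
  finally show ?thesis by simp
qed

lemma TT_indep:
  assumes "length s \<le> N" "length s \<le> M"
  shows "TT q om \<alpha> N M a b s = TT q om \<alpha> (length s) (length s) a b s"
proof -
  let ?L = "length s"
  have "TT q om \<alpha> N M a b s = (\<Sum>u\<in>Ws N. \<Sum>j\<le>?L. \<alpha> ^ j * FW om a u * qsh q u (vb b j) s)"
    unfolding TT_def
  proof (rule sum.cong[OF refl])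
    fix u
    show "(\<Sum>j\<le>M. \<alpha> ^ j * FW om a u * qsh q u (vb b j) s) = (\<Sum>j\<le>?L. \<alpha> ^ j * FW om a u * qsh q u (vb b j) s)"
    proof (rule sum.mono_neutral_right)
      show "\<forall>j\<in>{..M} - {..?L}. \<alpha> ^ j * FW om a u * qsh q u (vb b j) s = 0"
      proof
        fix j assume "j \<in> {..M} - {..?L}"
        hence "j > ?L" by auto
        moreover have "length (vb b j) \<ge> j" by (simp add: vb_def)
        ultimately have "qsh q u (vb b j) s = 0" using qsh_len[of q u "vb b j" s] by fastforce
        thus "\<alpha> ^ j * FW om a u * qsh q u (vb b j) s = 0" by simp
      qed
    qed (use assms in auto)
  qed
  also have "\<dots> = (\<Sum>u\<in>Ws ?L. \<Sum>j\<le>?L. \<alpha> ^ j * FW om a u * qsh q u (vb b j) s)"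
  proof (rule sum.mono_neutral_right)
    show "\<forall>u\<in>Ws N - Ws ?L. (\<Sum>j\<le>?L. \<alpha> ^ j * FW om a u * qsh q u (vb b j) s) = 0"
    proof
      fix u assume "u \<in> Ws N - Ws ?L"
      hence "length u > ?L" by (auto simp: Ws_def)
      hence "qsh q u (vb b j) s = 0" for j using qsh_len[of q u "vb b j" s] by fastforce
      thus "(\<Sum>j\<le>?L. \<alpha> ^ j * FW om a u * qsh q u (vb b j) s) = 0" by simp
    qed
  qed (use assms in \<open>auto simp: Ws_def\<close>)
  finally show ?thesis by (simp add: TT_def)
qed

definition TS :: "'a::field \<Rightarrow> (int \<Rightarrow> int \<Rightarrow> 'a) \<Rightarrow> 'a \<Rightarrow> int \<Rightarrow> bool \<Rightarrow> word \<Rightarrow> 'a" where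
  "TS q om \<alpha> a b s = TT q om \<alpha> (length s) (length s) a b s"

lemma TS_Nil: "TS q om \<alpha> a b [] = (if \<not> b \<and> a = 0 then 1 else 0)"
  by (simp add: TS_def TT_Nil)

lemma TS_Cons: "TS q om \<alpha> a b (c # s) = om a (a + bar c) * TS q om \<alpha> (a + bar c) b s
     + (if \<not> b \<and> c = X then \<alpha> * q powi (- 2 * a) * TS q om \<alpha> a True s else 0)
     + (if b \<and> c = Y then q powi (2 * a) * TS q om \<alpha> a False s else 0)"
proof -
  have "TS q om \<alpha> a b (c # s) = TT q om \<alpha> (Suc (length s)) (Suc (length s)) a b (c # s)" by (simp add: TS_def)
  also have "\<dots> = om a (a + bar c) * TT q om \<alpha> (length s) (Suc (length s)) (a + bar c) b s
     + (if \<not> b \<and> c = X then \<alpha> * q powi (- 2 * a) * TT q om \<alpha> (Suc (length s)) (length s) a True s else 0)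
     + (if b \<and> c = Y then q powi (2 * a) * TT q om \<alpha> (Suc (length s)) (Suc (length s)) a False s else 0)"
    by (subst TT_Cons) auto
  also have "\<dots> = om a (a + bar c) * TS q om \<alpha> (a + bar c) b s
     + (if \<not> b \<and> c = X then \<alpha> * q powi (- 2 * a) * TS q om \<alpha> a True s else 0)
     + (if b \<and> c = Y then q powi (2 * a) * TS q om \<alpha> a False s else 0)"
    using TT_indep[of s "length s" "Suc (length s)" q om \<alpha> "a + bar c" b]
      TT_indep[of s "Suc (length s)" "length s" q om \<alpha> a True]
      TT_indep[of s "Suc (length s)" "Suc (length s)" q om \<alpha> a False]
    by (simp add: TS_def)
  finally show ?thesis .
qed

lemma TS_inv:
  assumes X0: "\<And>p. A0 (p @ [X]) = om (ht p) (ht p + 1) * A0 p"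
    and X1: "\<And>p. A1 (p @ [X]) = \<alpha> * q powi (- 2 * ht p) * A0 p + om (ht p - 1) (ht p) * A1 p"
    and Y0: "\<And>p. A0 (p @ [Y]) = om (ht p) (ht p - 1) * A0 p + q powi (2 * (ht p - 1)) * A1 p"
    and Y1: "\<And>p. A1 (p @ [Y]) = om (ht p - 1) (ht p - 2) * A1 p"
  shows "A0 p * TS q om \<alpha> (ht p) False s + A1 p * TS q om \<alpha> (ht p - 1) True s
         = (if ht (p @ s) = 0 then A0 (p @ s) else 0)"
proof (induction s arbitrary: p)
  case Nil thus ?case by (simp add: TS_Nil)
next
  case (Cons c s)
  show ?case
  proof (cases c)
    case X
    have e1: "TS q om \<alpha> (ht p) False (X # s) = om (ht p) (ht p + 1) * TS q om \<alpha> (ht p + 1) False s + \<alpha> * q powi (- 2 * ht p) * TS q om \<alpha> (ht p) True s"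
      by (simp add: TS_Cons)
    have e2: "TS q om \<alpha> (ht p - 1) True (X # s) = om (ht p - 1) (ht p) * TS q om \<alpha> (ht p) True s"
      by (simp add: TS_Cons)
    have "A0 p * TS q om \<alpha> (ht p) False (c # s) + A1 p * TS q om \<alpha> (ht p - 1) True (c # s)
        = A0 (p @ [X]) * TS q om \<alpha> (ht (p @ [X])) False s + A1 (p @ [X]) * TS q om \<alpha> (ht (p @ [X]) - 1) True s"
      unfolding X0 X1 e1 e2 X by (simp add: algebra_simps)
    also have "\<dots> = (if ht (p @ [X] @ s) = 0 then A0 (p @ [X] @ s) else 0)" using Cons.IH[of "p @ [X]"] by simp
    finally show ?thesis using X by simp
  next
    case Y
    have e1: "TS q om \<alpha> (ht p) False (Y # s) = om (ht p) (ht p - 1) * TS q om \<alpha> (ht p - 1) False s"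
      by (simp add: TS_Cons)
    have e2: "TS q om \<alpha> (ht p - 1) True (Y # s) = om (ht p - 1) (ht p - 2) * TS q om \<alpha> (ht p - 2) True s
        + q powi (2 * (ht p - 1)) * TS q om \<alpha> (ht p - 1) False s"
      by (simp add: TS_Cons algebra_simps)
    have "A0 p * TS q om \<alpha> (ht p) False (c # s) + A1 p * TS q om \<alpha> (ht p - 1) True (c # s)
        = A0 (p @ [Y]) * TS q om \<alpha> (ht (p @ [Y])) False s + A1 (p @ [Y]) * TS q om \<alpha> (ht (p @ [Y]) - 1) True s"
      unfolding Y0 Y1 e1 e2 Y by (simp add: algebra_simps)
    also have "\<dots> = (if ht (p @ [Y] @ s) = 0 then A0 (p @ [Y] @ s) else 0)" using Cons.IH[of "p @ [Y]"] by simp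
    finally show ?thesis using Y by simp
  qed
qed

corollary TS_main:
  assumes X0: "\<And>p. A0 (p @ [X]) = om (ht p) (ht p + 1) * A0 p"
    and X1: "\<And>p. A1 (p @ [X]) = \<alpha> * q powi (- 2 * ht p) * A0 p + om (ht p - 1) (ht p) * A1 p"
    and Y0: "\<And>p. A0 (p @ [Y]) = om (ht p) (ht p - 1) * A0 p + q powi (2 * (ht p - 1)) * A1 p"
    and Y1: "\<And>p. A1 (p @ [Y]) = om (ht p - 1) (ht p - 2) * A1 p"
    and B: "A0 [] = 1" "A1 [] = 0"
  shows "TS q om \<alpha> 0 False s = (if ht s = 0 then A0 s else 0)"
  using TS_inv[of A0 om A1 \<alpha> q "[]" s, OF X0 X1 Y0 Y1] B by simp




lemma qint_I1:
  fixes q :: "'a::field"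
  assumes q0: "q \<noteq> 0" and d: "q - inverse q \<noteq> 0"
  shows "qint q (h + 1) = q * qint q h + q powi (- h)"
proof -
  have e1: "q powi (h + 1) = q powi h * q" using q0 by (simp add: power_int_add)
  have e2: "q powi (- (h + 1)) = inverse (q powi h) * inverse q"
    by (subst power_int_minus) (simp add: e1)
  have e3: "q powi (- h) = inverse (q powi h)" by (simp add: power_int_minus)
  have E: "q powi h \<noteq> 0" using q0 by simp
  show ?thesis unfolding qint_def e1 e2 e3 using d E q0
    by (simp add: field_simps)
qed

lemma qint_I2:
  fixes q :: "'a::field"
  assumes q0: "q \<noteq> 0" and d: "q - inverse q \<noteq> 0"
  shows "qint q (h + 1) = inverse q * qint q h + q powi h"
proof -
  have e1: "q powi (h + 1) = q powi h * q" using q0 by (simp add: power_int_add)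
  have e2: "q powi (- (h + 1)) = inverse (q powi h) * inverse q"
    by (subst power_int_minus) (simp add: e1)
  have e3: "q powi (- h) = inverse (q powi h)" by (simp add: power_int_minus)
  have E: "q powi h \<noteq> 0" using q0 by simp
  show ?thesis unfolding qint_def e1 e2 e3 using d E q0
    by (simp add: field_simps)
qed

lemma qint_0[simp]: "qint q 0 = 0" by (simp add: qint_def)

lemma qint_1: "q - inverse q \<noteq> 0 \<Longrightarrow> qint q 1 = 1" by (simp add: qint_def)

lemma pw3: "(q::'a::field) \<noteq> 0 \<Longrightarrow> q powi (a + b + c) = q powi a * q powi b * q powi c"
  by (simp add: power_int_add)

context
  fixes q :: "'a::field"
  assumes q0: "q \<noteq> 0" and d: "q - inverse q \<noteq> 0"
begin

lemma CX1: fixes H K :: int shows "- (q powi (2 - (H + 1) - K) * qint q (H + 1) * (P * qint q (H + 1)))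
   = - q * q powi (- 2 * H) * (q powi (- K) * qint q (H + 1) * P) + qint q (1 + H) * (- (q powi (2 - H - K) * qint q H * P))"
proof -
  have a: "q powi (2 - (H + 1) - K) = q * q powi (- H) * q powi (- K)"
    using pw3[of q 1 "-H" "-K"] q0 by (simp add: algebra_simps)
  have b: "q powi (- 2 * H) = q powi (- H) * q powi (- H) * q powi 0"
    using pw3[of q "-H" "-H" 0] q0 by (simp add: algebra_simps)
  have c: "q powi (2 - H - K) = q powi 2 * q powi (- H) * q powi (- K)"
    using pw3[of q 2 "-H" "-K"] q0 by (simp add: algebra_simps)
  have e: "qint q (1 + H) = qint q (H + 1)" by (simp add: add.commute)
  show ?thesis unfolding a b c e qint_I1[OF q0 d] by (simp add: algebra_simps power2_eq_square)
qed

lemma CY0: fixes H K :: int shows "q powi (- (K + 1)) * qint q H * (P * qint q H)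
   = qint q (1 + (H - 1)) * (q powi (- K) * qint q (H + 1) * P) + q powi (2 * (H - 1)) * (- (q powi (2 - H - K) * qint q H * P))"
proof -
  have a: "q powi (- (K + 1)) = q powi (- K) * q powi (-1) * q powi 0"
    using pw3[of q "-K" "-1" 0] q0 by (simp add: algebra_simps)
  have b: "q powi (2 * (H - 1)) * q powi (2 - H - K) = q powi H * q powi (- K) * q powi 0"
    using pw3[of q "2 * (H - 1)" "2 - H - K" 0] pw3[of q H "-K" 0] q0 by (simp add: algebra_simps)
  have e: "1 + (H - 1) = H" by simp
  have "q powi (2 * (H - 1)) * (- (q powi (2 - H - K) * qint q H * P)) = - (q powi (2 * (H - 1)) * q powi (2 - H - K)) * qint q H * P"
    by (simp add: algebra_simps)
  also have "\<dots> = - (q powi H * q powi (- K)) * qint q H * P" unfolding b by simp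
  finally have f: "q powi (2 * (H - 1)) * (- (q powi (2 - H - K) * qint q H * P)) = - (q powi H * q powi (- K)) * qint q H * P" .
  show ?thesis unfolding a e f qint_I2[OF q0 d] using q0 by (simp add: algebra_simps power_int_minus)
qed

lemma DX1: fixes H K :: int shows "- (q powi (1 - (H + 1) - K) * (P * qint q (H + 1)))
   = (- 1) * q powi (- 2 * H) * (q powi (- K) * P) + qint q H * (- (q powi (1 - H - K) * P))"
proof -
  have a: "q powi (1 - (H + 1) - K) = q powi (- H) * q powi (- K) * q powi 0"
    using pw3[of q "-H" "-K" 0] q0 by (simp add: algebra_simps)
  have b: "q powi (- 2 * H) = q powi (- H) * q powi (- H) * q powi 0"
    using pw3[of q "-H" "-H" 0] q0 by (simp add: algebra_simps)
  have c: "q powi (1 - H - K) = q powi 1 * q powi (- H) * q powi (- K)"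
    using pw3[of q 1 "-H" "-K"] q0 by (simp add: algebra_simps)
  show ?thesis unfolding a b c qint_I1[OF q0 d] by (simp add: algebra_simps)
qed

lemma DY0: fixes H K :: int shows "q powi (- (K + 1)) * (P * qint q (H - 1))
   = qint q H * (q powi (- K) * P) + q powi (2 * (H - 1)) * (- (q powi (1 - H - K) * P))"
proof -
  have a: "q powi (- (K + 1)) = q powi (- K) * q powi (-1) * q powi 0"
    using pw3[of q "-K" "-1" 0] q0 by (simp add: algebra_simps)
  have b: "q powi (2 * (H - 1)) * q powi (1 - H - K) = q powi (H - 1) * q powi (- K) * q powi 0"
    using pw3[of q "2 * (H - 1)" "1 - H - K" 0] pw3[of q "H - 1" "-K" 0] q0 by (simp add: algebra_simps)
  have e: "qint q H = qint q (H - 1 + 1)" by simp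
  have "q powi (2 * (H - 1)) * (- (q powi (1 - H - K) * P)) = - (q powi (2 * (H - 1)) * q powi (1 - H - K)) * P"
    by (simp add: algebra_simps)
  also have "\<dots> = - (q powi (H - 1) * q powi (- K)) * P" unfolding b by simp
  finally have f: "q powi (2 * (H - 1)) * (- (q powi (1 - H - K) * P)) = - (q powi (H - 1) * q powi (- K)) * P" .
  show ?thesis unfolding a f e qint_I2[OF q0 d] using q0 by (simp add: algebra_simps power_int_minus)
qed

end

definition omC :: "'a::field \<Rightarrow> int \<Rightarrow> int \<Rightarrow> 'a" where "omC q h h' = qint q (1 + h')"
definition omD :: "'a::field \<Rightarrow> int \<Rightarrow> int \<Rightarrow> 'a" where "omD q h h' = qint q (max h h')"
definition sgD :: "'a::field \<Rightarrow> int \<Rightarrow> int \<Rightarrow> 'a" where "sgD q h h' = (if h' < 0 then 0 else qint q h')"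
definition Yc :: "word \<Rightarrow> int" where "Yc p = int (length (filter (\<lambda>c. c = Y) p))"

definition A0C :: "'a::field \<Rightarrow> word \<Rightarrow> 'a" where
  "A0C q p = q powi (- Yc p) * qint q (ht p + 1) * PW (omD q) 0 p"
definition A1C :: "'a::field \<Rightarrow> word \<Rightarrow> 'a" where
  "A1C q p = - (q powi (2 - ht p - Yc p) * qint q (ht p) * PW (omD q) 0 p)"
definition A0D :: "'a::field \<Rightarrow> word \<Rightarrow> 'a" where
  "A0D q p = q powi (- Yc p) * PW (sgD q) 0 p"
definition A1D :: "'a::field \<Rightarrow> word \<Rightarrow> 'a" where
  "A1D q p = (if ht p = 0 then 0 else - (q powi (1 - ht p - Yc p) * PW (sgD q) 0 p))"

lemma PW_snoc: "PW om a (p @ [c]) = PW om a p * om (a + ht p) (a + ht p + bar c)"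
  by (induction p arbitrary: a) (auto simp: algebra_simps)

lemma Yc_simps[simp]: "Yc [] = 0" "Yc (p @ [X]) = Yc p" "Yc (p @ [Y]) = Yc p + 1"
  by (simp_all add: Yc_def)

lemma PW_sgD_zero: "ht p \<le> 0 \<Longrightarrow> p \<noteq> [] \<Longrightarrow> PW (sgD q) 0 p = 0"
proof (induction p rule: rev_induct)
  case Nil thus ?case by simp
next
  case (snoc c p)
  thus ?case by (cases c) (auto simp: PW_snoc sgD_def)
qed

context
  fixes q :: "'a::field"
  assumes q0: "q \<noteq> 0" and d: "q - inverse q \<noteq> 0"
begin

lemma C_X0: "A0C q (p @ [X]) = omC q (ht p) (ht p + 1) * A0C q p"
  unfolding A0C_def omC_def PW_snoc omD_def by (simp add: algebra_simps)

lemma C_X1: "A1C q (p @ [X]) = (- q) * q powi (- 2 * ht p) * A0C q p + omC q (ht p - 1) (ht p) * A1C q p"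
  unfolding A0C_def A1C_def omC_def PW_snoc omD_def
  using CX1[OF q0 d, of "ht p" "Yc p" "PW (\<lambda>h h'. qint q (max h h')) 0 p"] by simp

lemma C_Y0: "A0C q (p @ [Y]) = omC q (ht p) (ht p - 1) * A0C q p + q powi (2 * (ht p - 1)) * A1C q p"
  unfolding A0C_def A1C_def omC_def PW_snoc omD_def
  using CY0[OF q0 d, of "Yc p" "ht p" "PW (\<lambda>h h'. qint q (max h h')) 0 p"] by simp

lemma C_Y1: "A1C q (p @ [Y]) = omC q (ht p - 1) (ht p - 2) * A1C q p"
  unfolding A0C_def A1C_def omC_def PW_snoc omD_def by (simp add: algebra_simps)

lemma sgD_pos[simp]: "h' \<ge> 0 \<Longrightarrow> sgD q h h' = qint q h'" by (simp add: sgD_def)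

lemma D_X0: "A0D q (p @ [X]) = omD q (ht p) (ht p + 1) * A0D q p"
proof (cases "ht p < 0")
  case True
  hence "p \<noteq> []" by auto
  with True show ?thesis unfolding A0D_def PW_snoc by (simp add: PW_sgD_zero)
qed (simp add: A0D_def PW_snoc omD_def sgD_def)

lemma D_X1: "A1D q (p @ [X]) = (- 1) * q powi (- 2 * ht p) * A0D q p + omD q (ht p - 1) (ht p) * A1D q p"
proof -
  consider "ht p < 0" | "ht p = 0" | "ht p > 0" by linarith
  thus ?thesis
  proof cases
    case 1
    hence "p \<noteq> []" by auto
    with 1 show ?thesis unfolding A0D_def A1D_def PW_snoc by (simp add: PW_sgD_zero)
  next
    case 2
    thus ?thesis unfolding A0D_def A1D_def PW_snoc using d by (simp add: sgD_def omD_def qint_1)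
  next
    case 3
    thus ?thesis unfolding A0D_def A1D_def PW_snoc omD_def
      using DX1[OF q0 d, of "ht p" "Yc p" "PW (sgD q) 0 p"] by simp
  qed
qed

lemma D_Y0: "A0D q (p @ [Y]) = omD q (ht p) (ht p - 1) * A0D q p + q powi (2 * (ht p - 1)) * A1D q p"
proof -
  consider "ht p < 0" | "ht p = 0" | "ht p > 0" by linarith
  thus ?thesis
  proof cases
    case 1
    hence "p \<noteq> []" by auto
    with 1 show ?thesis unfolding A0D_def A1D_def PW_snoc by (simp add: PW_sgD_zero)
  next
    case 2
    thus ?thesis unfolding A0D_def A1D_def PW_snoc by (simp add: sgD_def omD_def)
  next
    case 3
    thus ?thesis unfolding A0D_def A1D_def PW_snoc omD_def
      using DY0[OF q0 d, of "Yc p" "PW (sgD q) 0 p" "ht p"] by simp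
  qed
qed

lemma D_Y1: "A1D q (p @ [Y]) = omD q (ht p - 1) (ht p - 2) * A1D q p"
proof -
  consider "ht p < 0" | "ht p = 0" | "ht p = 1" | "ht p > 1" by linarith
  thus ?thesis
  proof cases
    case 1
    hence "p \<noteq> []" by auto
    with 1 show ?thesis unfolding A0D_def A1D_def PW_snoc by (simp add: PW_sgD_zero)
  next
    case 2
    thus ?thesis unfolding A0D_def A1D_def PW_snoc by (simp add: sgD_def omD_def)
  next
    case 3
    thus ?thesis unfolding A0D_def A1D_def PW_snoc by (simp add: sgD_def omD_def)
  next
    case 4
    thus ?thesis unfolding A0D_def A1D_def PW_snoc by (simp add: sgD_def omD_def algebra_simps)
  qed
qed

lemma TS_C: "TS q (omC q) (- q) 0 False s = (if ht s = 0 then A0C q s else 0)"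
  by (rule TS_main[OF C_X0 C_X1 C_Y0 C_Y1]) (use d in \<open>simp_all add: A0C_def A1C_def qint_1\<close>)

lemma TS_D: "TS q (omD q) (- 1) 0 False s = (if ht s = 0 then A0D q s else 0)"
  by (rule TS_main[OF D_X0 D_X1 D_Y0 D_Y1]) (simp_all add: A0D_def A1D_def)

end



definition Fi :: "(int \<Rightarrow> int \<Rightarrow> 'a::field) \<Rightarrow> nat \<Rightarrow> word \<Rightarrow> 'a" where
  "Fi om i u = (if length u = 2 * i then FW om 0 u else 0)"

lemma Gt_xyw: "Gt j = wd (xyw j)" by (simp add: Gt_def xyw_def)

lemma supp_wd: "{v. (wd t :: 'a::field vect) v \<noteq> 0} = {t}" by (auto simp: wd_def)

lemma shuf_wd:
  assumes "{u. f u \<noteq> 0} \<subseteq> Ws N"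
  shows "shuf q f (wd t) w = (\<Sum>u\<in>Ws N. f u * qsh q u t w)"
proof -
  have "shuf q f (wd t) w = (\<Sum>u\<in>{u. f u \<noteq> 0}. f u * qsh q u t w)"
    unfolding shuf_def supp_wd by (simp add: wd_def)
  also have "\<dots> = (\<Sum>u\<in>Ws N. f u * qsh q u t w)"
    by (rule sum.mono_neutral_left) (use assms in auto)
  finally show ?thesis .
qed

lemma shuf_Gt:
  assumes "{u. f u \<noteq> 0} \<subseteq> Ws N"
  shows "shuf q f (Gt j) w = (\<Sum>u\<in>Ws N. f u * qsh q u (xyw j) w)"
  unfolding Gt_xyw by (rule shuf_wd[OF assms])

lemma shuf_unit_right:
  assumes "{u. f u \<noteq> 0} \<subseteq> Ws N"
  shows "shuf q f (wd []) w = f w"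
proof -
  have "shuf q f (wd []) w = (\<Sum>u\<in>Ws N. f u * wd u w)"
    using shuf_wd[OF assms] by (simp add: qsh_u_Nil)
  also have "\<dots> = (\<Sum>u\<in>Ws N. if u = w then f w else 0)"
    by (rule sum.cong) (auto simp: wd_def)
  also have "\<dots> = f w" using assms by (auto simp: Ws_def)
  finally show ?thesis .
qed

lemma shuf_unit_left:
  assumes "{u. g u \<noteq> 0} \<subseteq> Ws N"
  shows "shuf q (wd []) g w = g w"
proof -
  have "shuf q (wd []) g w = (\<Sum>v\<in>{v. g v \<noteq> 0}. g v * wd v w)"
    unfolding shuf_def supp_wd by (simp add: wd_def)
  also have "\<dots> = (\<Sum>v\<in>{v. g v \<noteq> 0}. if v = w then g w else 0)"
    by (rule sum.cong) (auto simp: wd_def)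
  also have "\<dots> = g w"
    using finite_subset[OF assms finite_Ws] by (auto simp: sum.delta)
  finally show ?thesis .
qed

lemma supp_Fi: "{u. Fi om i u \<noteq> 0} \<subseteq> Ws (2 * i)" by (auto simp: Fi_def Ws_def split: if_splits)

lemma TS_expand: "TS q om \<alpha> 0 False w = (\<Sum>j\<le>length w. \<alpha> ^ j * (\<Sum>u\<in>Ws (length w). FW om 0 u * qsh q u (xyw j) w))"
  unfolding TS_def TT_def vb_def by (simp add: sum.swap[of _ "Ws _"] sum_distrib_left algebra_simps)

lemma TS_graded:
  assumes "length w = 2 * n"
  shows "(\<Sum>j\<le>n. \<alpha> ^ j * (\<Sum>u\<in>Ws (2 * n). Fi om (n - j) u * qsh q u (xyw j) w)) = TS q om \<alpha> 0 False w"
proof -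
  have "TS q om \<alpha> 0 False w = (\<Sum>j\<le>2 * n. \<alpha> ^ j * (\<Sum>u\<in>Ws (2 * n). FW om 0 u * qsh q u (xyw j) w))"
    using assms by (simp add: TS_expand)
  also have "\<dots> = (\<Sum>j\<le>n. \<alpha> ^ j * (\<Sum>u\<in>Ws (2 * n). FW om 0 u * qsh q u (xyw j) w))"
  proof (rule sum.mono_neutral_right)
    show "\<forall>j\<in>{..2 * n} - {..n}. \<alpha> ^ j * (\<Sum>u\<in>Ws (2 * n). FW om 0 u * qsh q u (xyw j) w) = 0"
    proof
      fix j assume "j \<in> {..2 * n} - {..n}"
      hence "j > n" by auto
      hence "qsh q u (xyw j) w = 0" for u using qsh_len[of q u "xyw j" w] assms by fastforce
      thus "\<alpha> ^ j * (\<Sum>u\<in>Ws (2 * n). FW om 0 u * qsh q u (xyw j) w) = 0" by simp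
    qed
  qed auto
  also have "\<dots> = (\<Sum>j\<le>n. \<alpha> ^ j * (\<Sum>u\<in>Ws (2 * n). Fi om (n - j) u * qsh q u (xyw j) w))"
  proof (intro sum.cong refl arg_cong[where f="\<lambda>x. _ * x"])
    fix j u assume j: "j \<in> {..n}"
    show "FW om 0 u * qsh q u (xyw j) w = Fi om (n - j) u * qsh q u (xyw j) w"
    proof (cases "qsh q u (xyw j) w = 0")
      case False
      hence "length u = 2 * (n - j)" using qsh_len[of q u "xyw j" w] assms j by auto
      thus ?thesis by (simp add: Fi_def)
    qed simp
  qed
  finally show ?thesis by simp
qed

lemma shuf_Gt_zero:
  assumes "{u. f u \<noteq> 0} \<subseteq> {u. length u = m}" "length w \<noteq> m + 2 * j"
  shows "shuf q f (Gt j) w = 0"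
proof -
  have s: "{u. f u \<noteq> 0} \<subseteq> Ws m" using assms(1) by (auto simp: Ws_def)
  have z: "f u * qsh q u (xyw j) w = 0" for u
  proof (cases "f u = 0")
    case False
    hence "length u = m" using assms(1) by auto
    hence "qsh q u (xyw j) w = 0" using qsh_len[of q u "xyw j" w] assms(2) by auto
    thus ?thesis by simp
  qed simp
  show ?thesis by (simp add: shuf_Gt[OF s] z)
qed




lemma hsum_0[simp]: "hsum u 0 = 0" by (simp add: hsum_def)
lemma hsum_Suc: "hsum u (Suc k) = hsum u k + bar (u ! k)" by (simp add: hsum_def)
lemma hsum_Cons_Suc: "hsum (c # u) (Suc k) = bar c + hsum u k"
  unfolding hsum_def sum.lessThan_Suc_shift by simp
lemma hsum_len: "hsum u (length u) = ht u"
  by (induction u) (simp_all add: hsum_Cons_Suc)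
lemma bar_cases: "bar c = 1 \<or> bar c = -1" by (cases c) auto

lemma PW_omC: "PW (omC q) a u = (\<Prod>k\<in>{1..length u}. qint q (1 + a + hsum u k))"
proof (induction u arbitrary: a)
  case Nil thus ?case by simp
next
  case (Cons c u)
  have "(\<Prod>k\<in>{1..length (c # u)}. qint q (1 + a + hsum (c # u) k))
      = (\<Prod>k\<in>{1..Suc (length u)}. qint q (1 + a + hsum (c # u) k))" by simp
  also have "\<dots> = qint q (1 + a + hsum (c # u) 1) * (\<Prod>k\<in>{Suc 1..Suc (length u)}. qint q (1 + a + hsum (c # u) k))"
    by (rule prod.atLeast_Suc_atMost) simp
  also have "\<dots> = qint q (1 + a + bar c) * (\<Prod>k\<in>{1..length u}. qint q (1 + a + hsum (c # u) (Suc k)))"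
    by (simp only: prod.shift_bounds_cl_Suc_ivl) (simp add: hsum_Cons_Suc)
  also have "\<dots> = omC q a (a + bar c) * PW (omC q) (a + bar c) u"
    by (simp only: Cons.IH) (simp add: hsum_Cons_Suc omC_def algebra_simps)
  finally show ?case by simp
qed

lemma hsum_neg: "hsum u k < 0 \<Longrightarrow> \<exists>k0. 1 \<le> k0 \<and> k0 \<le> k \<and> hsum u k0 = -1"
proof (induction k)
  case 0 thus ?case by simp
next
  case (Suc k)
  show ?case
  proof (cases "hsum u k < 0")
    case True thus ?thesis using Suc.IH by force
  next
    case False
    hence "hsum u (Suc k) = -1" using Suc.prems bar_cases[of "u ! k"] by (auto simp: hsum_Suc)
    thus ?thesis by force
  qed
qed

lemma Cn_Fi:
  assumes d: "q - inverse q \<noteq> 0"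
  shows "Cn q i = Fi (omC q) i"
proof
  fix u
  show "Cn q i u = Fi (omC q) i u"
  proof (cases "length u = 2 * i")
    case L: True
    have P: "(\<Prod>k\<in>{0..2 * i}. qint q (1 + hsum u k)) = PW (omC q) 0 u"
      using L d by (simp add: PW_omC prod.atLeast_Suc_atMost qint_1 flip: One_nat_def)
    show ?thesis
    proof (cases "catalan u")
      case True
      hence "hsum u (length u) = 0" by (simp add: catalan_def)
      hence "ht u = 0" by (simp add: hsum_len)
      thus ?thesis using True L P by (simp add: Cn_def Fi_def FW_def)
    next
      case False
      show ?thesis
      proof (cases "ht u = 0")
        case True
        have "hsum u (2 * i) = 0" using True L hsum_len by metis
        with False L obtain k where k: "1 \<le> k" "k \<le> 2 * i - 1" "hsum u k < 0"
          by (auto simp: catalan_def hsum_len)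
        then obtain k0 where k0: "1 \<le> k0" "k0 \<le> k" "hsum u k0 = -1" using hsum_neg by blast
        have "PW (omC q) 0 u = 0" unfolding PW_omC L
          by (rule prod_zero) (use k k0 in \<open>auto intro!: bexI[of _ k0]\<close>)
        thus ?thesis using False L by (simp add: Cn_def Fi_def FW_def)
      qed (use False L in \<open>simp add: Cn_def Fi_def FW_def\<close>)
    qed
  qed (simp add: Cn_def Fi_def)
qed

definition Dc :: "'a::field \<Rightarrow> nat \<Rightarrow> 'a vect" where
  "Dc q i = (\<lambda>u. (- 1) ^ i * Fi (omD q) i u)"

lemma supp_Dc: "{u. Dc q i u \<noteq> 0} \<subseteq> {u. length u = 2 * i}"
  by (auto simp: Dc_def Fi_def split: if_splits)

lemma supp_Dc': "i \<le> n \<Longrightarrow> {u. Dc q i u \<noteq> 0} \<subseteq> Ws (2 * n)"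
  using supp_Dc[of q i] by (auto simp: Ws_def)

lemma supp_Fi_eq: "{u. Fi om i u \<noteq> 0} \<subseteq> {u. length u = 2 * i}"
  by (auto simp: Fi_def split: if_splits)

lemma neg1_pow_diff: "j \<le> n \<Longrightarrow> (- 1 :: 'a::field) ^ (n - j) = (- 1) ^ n * (- 1) ^ j"
proof -
  assume "j \<le> n"
  then obtain k where n: "n = j + k" using le_Suc_ex by blast
  have "(- 1 :: 'a) ^ j * (- 1) ^ j = 1" by (simp flip: power_add)
  hence "(- 1 :: 'a) ^ n * (- 1) ^ j = (- 1) ^ k" by (simp add: n power_add algebra_simps)
  thus ?thesis using n by simp
qed

lemma ht_Yc: "ht w + 2 * Yc w = int (length w)"
  by (induction w rule: rev_induct) (auto simp: Yc_def elim: letter.exhaust, case_tac x, auto)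

context
  fixes q :: "'a::field"
  assumes q0: "q \<noteq> 0" and d: "q - inverse q \<noteq> 0"
begin

lemma Dsum:
  assumes n: "n \<ge> 1"
  shows "(\<Sum>i\<le>n. shuf q (Dc q i) (Gt (n - i)) w) = 0"
proof (cases "length w = 2 * n")
  case False
  have "shuf q (Dc q i) (Gt (n - i)) w = 0" if "i \<le> n" for i
    by (rule shuf_Gt_zero[OF supp_Dc]) (use False that in auto)
  thus ?thesis by simp
next
  case True
  have "(\<Sum>i\<le>n. shuf q (Dc q i) (Gt (n - i)) w) = (\<Sum>i\<le>n. \<Sum>u\<in>Ws (2 * n). Dc q i u * qsh q u (xyw (n - i)) w)"
    by (rule sum.cong[OF refl]) (simp add: shuf_Gt[OF supp_Dc'])
  also have "\<dots> = (\<Sum>j\<le>n. \<Sum>u\<in>Ws (2 * n). Dc q (n - j) u * qsh q u (xyw j) w)"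
    unfolding atMost_atLeast0 by (subst sum.atLeastAtMost_rev) simp
  also have "\<dots> = (- 1) ^ n * (\<Sum>j\<le>n. (- 1) ^ j * (\<Sum>u\<in>Ws (2 * n). Fi (omD q) (n - j) u * qsh q u (xyw j) w))"
    unfolding sum_distrib_left
    by (rule sum.cong[OF refl]) (simp add: Dc_def neg1_pow_diff sum_distrib_left algebra_simps)
  also have "\<dots> = (- 1) ^ n * TS q (omD q) (- 1) 0 False w"
    by (simp add: TS_graded[OF True])
  also have "\<dots> = 0"
  proof -
    have "w \<noteq> []" using True n by auto
    have "PW (sgD q) 0 w = 0" if "ht w = 0" using PW_sgD_zero[of w q] that \<open>w \<noteq> []\<close> by simp
    thus ?thesis by (simp add: TS_D[OF q0 d] A0D_def)
  qed
  finally show ?thesis .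
qed

lemma Dn_closed: "Dn q n = Dc q n"
proof (induction n rule: less_induct)
  case (less n)
  show ?case
  proof (cases "n = 0")
    case True
    thus ?thesis by (subst Dn.simps) (auto simp: Dc_def Fi_def wd_def)
  next
    case False
    show ?thesis
    proof
      fix w
      have "Dn q n w = - (\<Sum>i<n. shuf q (Dn q i) (Gt (n - i)) w)"
        using False by (subst Dn.simps) simp
      also have "\<dots> = - (\<Sum>i<n. shuf q (Dc q i) (Gt (n - i)) w)"
        using less.IH by simp
      also have "\<dots> = shuf q (Dc q n) (Gt 0) w"
        using Dsum[of n w] False by (simp add: lessThan_Suc_atMost[symmetric] add_eq_0_iff)
      also have "\<dots> = Dc q n w"
        using shuf_unit_right[OF supp_Dc'[of n n q]] by (simp add: Gt_def)
      finally show "Dn q n w = Dc q n w" .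
    qed
  qed
qed

lemma E_ident:
  "(\<Sum>j\<le>n. (- q) ^ j * shuf q (Cn q (n - j)) (Gt j) w) = (- inverse q) ^ n * Dn q n w"
proof (cases "length w = 2 * n")
  case False
  have "shuf q (Cn q (n - j)) (Gt j) w = 0" if "j \<le> n" for j
    unfolding Cn_Fi[OF d] by (rule shuf_Gt_zero[OF supp_Fi_eq]) (use False that in auto)
  moreover have "Dn q n w = 0" unfolding Dn_closed using False by (simp add: Dc_def Fi_def)
  ultimately show ?thesis by simp
next
  case True
  have s: "{u. Fi (omC q) (n - j) u \<noteq> 0} \<subseteq> Ws (2 * n)" for j
    using supp_Fi[of "omC q" "n - j"] by (auto simp: Ws_def)
  have "(\<Sum>j\<le>n. (- q) ^ j * shuf q (Cn q (n - j)) (Gt j) w)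
      = (\<Sum>j\<le>n. (- q) ^ j * (\<Sum>u\<in>Ws (2 * n). Fi (omC q) (n - j) u * qsh q u (xyw j) w))"
    unfolding Cn_Fi[OF d] by (simp add: shuf_Gt[OF s])
  also have "\<dots> = TS q (omC q) (- q) 0 False w" by (rule TS_graded[OF True])
  also have "\<dots> = (if ht w = 0 then A0C q w else 0)" by (rule TS_C[OF q0 d])
  also have "\<dots> = (- inverse q) ^ n * Dn q n w"
  proof (cases "ht w = 0")
    case True
    have Y: "Yc w = int n" using ht_Yc[of w] True \<open>length w = 2 * n\<close> by simp
    have "(- inverse q) ^ n * (- 1) ^ n = q powi (- int n)"
      by (simp add: power_int_minus power_mult_distrib[symmetric] power_inverse)
    thus ?thesis unfolding Dn_closed using True Y \<open>length w = 2 * n\<close> d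
      by (simp add: A0C_def Dc_def Fi_def FW_def qint_1 algebra_simps)
  qed (simp only: Dn_closed, simp add: Dc_def Fi_def FW_def)
  finally show ?thesis .
qed

end




lemma ga_zero: "(\<lambda>w. 0) \<in> gen_subalg q S"
  using gen_subalg.smult[OF gen_subalg.one[of q S], of 0] by simp

lemma ga_lin: "f \<in> gen_subalg q S \<Longrightarrow> g \<in> gen_subalg q S \<Longrightarrow> (\<lambda>w. a * f w + b * g w) \<in> gen_subalg q S"
  by (intro gen_subalg.add gen_subalg.smult)

lemma ga_sum: "finite I \<Longrightarrow> (\<And>i. i \<in> I \<Longrightarrow> f i \<in> gen_subalg q S) \<Longrightarrow> (\<lambda>w. \<Sum>i\<in>I. c i * f i w) \<in> gen_subalg q S"
proof (induction I rule: finite_induct)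
  case empty thus ?case by (simp add: ga_zero)
next
  case (insert x F)
  have "(\<lambda>w. c x * f x w + 1 * (\<Sum>i\<in>F. c i * f i w)) \<in> gen_subalg q S"
    using insert by (intro ga_lin) auto
  thus ?case using insert by simp
qed

lemma ga_mono: "S \<subseteq> gen_subalg q T \<Longrightarrow> gen_subalg q S \<subseteq> gen_subalg q T"
proof
  fix f assume S: "S \<subseteq> gen_subalg q T" and f: "f \<in> gen_subalg q S"
  from f show "f \<in> gen_subalg q T" by (induction rule: gen_subalg.induct) (use S in \<open>auto intro: gen_subalg.intros\<close>)
qed

lemma supp_Gt: "{u. Gt n u \<noteq> 0} \<subseteq> Ws (2 * n)" by (auto simp: Gt_xyw wd_def Ws_def split: if_splits)

lemma Gt0: "Gt 0 = wd []" by (simp add: Gt_def)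

lemma Dn0: "Dn q 0 = wd []" by (subst Dn.simps) simp

lemma Dn_eq: "n \<ge> 1 \<Longrightarrow> Dn q n = (\<lambda>w. \<Sum>i\<in>{..<n}. (- 1) * shuf q (Dn q i) (Gt (n - i)) w)"
  by (subst Dn.simps) (simp del: Dn.simps add: sum_negf)

lemma Gt_rec:
  assumes "n \<ge> 1"
  shows "Gt n w = - Dn q n w - (\<Sum>i\<in>{1..<n}. shuf q (Dn q i) (Gt (n - i)) w)"
proof -
  have "{..<n} = insert 0 {1..<n}" using assms by auto
  hence "Dn q n w = - (shuf q (Dn q 0) (Gt n) w + (\<Sum>i\<in>{1..<n}. shuf q (Dn q i) (Gt (n - i)) w))"
    using Dn_eq[OF assms, of q] by (simp del: Dn.simps add: sum_negf)
  moreover have "shuf q (Dn q 0) (Gt n) w = Gt n w" unfolding Dn0 by (rule shuf_unit_left[OF supp_Gt])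
  ultimately show ?thesis by simp
qed

context
  fixes q :: "'a::field"
  assumes q0: "q \<noteq> 0" and d: "q - inverse q \<noteq> 0"
begin

lemma Cn0: "Cn q 0 = wd []"
  unfolding Cn_Fi[OF d] by (auto simp: Fi_def wd_def)

lemma supp_Cn: "{u. Cn q n u \<noteq> 0} \<subseteq> Ws (2 * n)"
  unfolding Cn_Fi[OF d] by (rule supp_Fi)

lemma C_rec:
  assumes "n \<ge> 1"
  shows "Cn q n w + (\<Sum>j\<in>{1..<n}. (- q) ^ j * shuf q (Cn q (n - j)) (Gt j) w) + (- q) ^ n * Gt n w
       = (- inverse q) ^ n * Dn q n w"
proof -
  have "{..n} = insert 0 (insert n {1..<n})" using assms by auto
  hence "(\<Sum>j\<le>n. (- q) ^ j * shuf q (Cn q (n - j)) (Gt j) w)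
     = shuf q (Cn q n) (Gt 0) w + ((- q) ^ n * shuf q (Cn q 0) (Gt n) w + (\<Sum>j\<in>{1..<n}. (- q) ^ j * shuf q (Cn q (n - j)) (Gt j) w))"
    using assms by simp
  moreover have "shuf q (Cn q n) (Gt 0) w = Cn q n w" unfolding Gt0 by (rule shuf_unit_right[OF supp_Cn])
  moreover have "shuf q (Cn q 0) (Gt n) w = Gt n w" unfolding Cn0 by (rule shuf_unit_left[OF supp_Gt])
  ultimately show ?thesis using E_ident[OF q0 d, of n w] by (simp add: algebra_simps)
qed

end

theorem corollary11p12:
  fixes q :: "'a::field"
  assumes "q \<noteq> 0"
    and "\<forall>n::nat. n \<ge> 1 \<longrightarrow> q ^ n \<noteq> 1"
  shows "gen_subalg q {Cn q n | n. n \<ge> 1} = gen_subalg q {Dn q n | n. n \<ge> 1}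
       \<and> gen_subalg q {Dn q n | n. n \<ge> 1} = gen_subalg q {Gt n | n. n \<ge> 1}"
proof -
  let ?C = "{Cn q n | n. n \<ge> 1}"
  let ?D = "{Dn q n | n. n \<ge> 1}"
  let ?G = "{Gt n | n. n \<ge> 1}"
  have q0: "q \<noteq> 0" using assms(1) .
  have d: "q - inverse q \<noteq> 0"
  proof
    assume "q - inverse q = 0"
    hence "q = inverse q" by simp
    hence "q * q = 1" using q0 by (metis right_inverse)
    hence "q ^ 2 = 1" by (simp add: power2_eq_square)
    thus False using assms(2) by auto
  qed
  have kap: "(- inverse q) ^ n + (- q) ^ n \<noteq> 0" if "n \<ge> 1" for n :: nat
  proof
    assume h: "(- inverse q) ^ n + (- q) ^ n = 0"
    define z where "z = q ^ n"
    have z0: "z \<noteq> 0" using q0 by (simp add: z_def)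
    have m1: "(- inverse q) ^ n = (- 1) ^ n * inverse z" unfolding z_def power_inverse[symmetric] by (rule power_minus)
    have m2: "(- q) ^ n = (- 1) ^ n * z" unfolding z_def by (rule power_minus)
    have "(- 1) ^ n * (inverse z + z) = 0"
      using h unfolding m1 m2 by (simp only: distrib_left)
    hence "inverse z + z = 0" by simp
    hence "z * (inverse z + z) = 0" by simp
    hence "1 + z * z = 0" using z0 by (simp add: algebra_simps)
    hence "z * z = - 1" by (simp add: add_eq_0_iff)
    hence "(z * z) * (z * z) = 1" by simp
    moreover have "(z * z) * (z * z) = q ^ (4 * n)"
    proof -
      have "4 * n = n + (n + (n + n))" by simp
      thus ?thesis by (simp only: z_def power_add mult.assoc)
    qed
    ultimately have "q ^ (4 * n) = 1" by simp
    thus False using assms(2) that by auto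
  qed
  have DG: "Dn q n \<in> gen_subalg q ?G" for n
  proof (induction n rule: less_induct)
    case (less n)
    show ?case
    proof (cases "n = 0")
      case True thus ?thesis by (simp add: Dn0 gen_subalg.one)
    next
      case False
      have "(\<lambda>w. \<Sum>i\<in>{..<n}. (- 1) * shuf q (Dn q i) (Gt (n - i)) w) \<in> gen_subalg q ?G"
      proof (rule ga_sum[of "{..<n}" "\<lambda>i. shuf q (Dn q i) (Gt (n - i))"])
        fix i assume "i \<in> {..<n}"
        hence "Dn q i \<in> gen_subalg q ?G" "Gt (n - i) \<in> gen_subalg q ?G"
          using less.IH by (auto intro!: gen_subalg.base)
        thus "shuf q (Dn q i) (Gt (n - i)) \<in> gen_subalg q ?G" by (rule gen_subalg.mult)
      qed simp
      thus ?thesis using Dn_eq[of n q] False by simp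
    qed
  qed
  have GD: "Gt n \<in> gen_subalg q ?D" for n
  proof (induction n rule: less_induct)
    case (less n)
    show ?case
    proof (cases "n = 0")
      case True thus ?thesis by (simp add: Gt0 gen_subalg.one)
    next
      case False
      have S: "(\<lambda>w. \<Sum>i\<in>{1..<n}. 1 * shuf q (Dn q i) (Gt (n - i)) w) \<in> gen_subalg q ?D"
      proof (rule ga_sum[of "{1..<n}" "\<lambda>i. shuf q (Dn q i) (Gt (n - i))"])
        fix i assume "i \<in> {1..<n}"
        hence "Dn q i \<in> gen_subalg q ?D" "Gt (n - i) \<in> gen_subalg q ?D"
          using less.IH by (auto intro!: gen_subalg.base)
        thus "shuf q (Dn q i) (Gt (n - i)) \<in> gen_subalg q ?D" by (rule gen_subalg.mult)
      qed simp
      have "Dn q n \<in> gen_subalg q ?D" using False by (auto intro!: gen_subalg.base)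
      from ga_lin[OF this S, of "- 1" "- 1"]
      have "(\<lambda>w. (- 1) * Dn q n w + (- 1) * (\<Sum>i\<in>{1..<n}. 1 * shuf q (Dn q i) (Gt (n - i)) w)) \<in> gen_subalg q ?D" .
      moreover have "(\<lambda>w. (- 1) * Dn q n w + (- 1) * (\<Sum>i\<in>{1..<n}. 1 * shuf q (Dn q i) (Gt (n - i)) w)) = Gt n"
        using Gt_rec[of n _ q] False by (auto simp: fun_eq_iff)
      ultimately show ?thesis by simp
    qed
  qed
  have CG: "Cn q n \<in> gen_subalg q ?G" for n
  proof (induction n rule: less_induct)
    case (less n)
    show ?case
    proof (cases "n = 0")
      case True thus ?thesis by (simp add: Cn0[OF q0 d] gen_subalg.one)
    next
      case False
      have R: "(\<lambda>w. \<Sum>j\<in>{1..<n}. (- q) ^ j * shuf q (Cn q (n - j)) (Gt j) w) \<in> gen_subalg q ?G"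
      proof (rule ga_sum[of "{1..<n}" "\<lambda>j. shuf q (Cn q (n - j)) (Gt j)"])
        fix j assume "j \<in> {1..<n}"
        hence "Cn q (n - j) \<in> gen_subalg q ?G" "Gt j \<in> gen_subalg q ?G"
          using less.IH by (auto intro!: gen_subalg.base)
        thus "shuf q (Cn q (n - j)) (Gt j) \<in> gen_subalg q ?G" by (rule gen_subalg.mult)
      qed simp
      have "Gt n \<in> gen_subalg q ?G" using False by (auto intro!: gen_subalg.base)
      from ga_lin[OF R this, of "- 1" "- ((- q) ^ n)"]
      have H1: "(\<lambda>w. (- 1) * (\<Sum>j\<in>{1..<n}. (- q) ^ j * shuf q (Cn q (n - j)) (Gt j) w) + (- ((- q) ^ n)) * Gt n w) \<in> gen_subalg q ?G" .
      from ga_lin[OF DG[of n] H1, of "(- inverse q) ^ n" 1]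
      have "(\<lambda>w. (- inverse q) ^ n * Dn q n w + 1 * ((- 1) * (\<Sum>j\<in>{1..<n}. (- q) ^ j * shuf q (Cn q (n - j)) (Gt j) w) + (- ((- q) ^ n)) * Gt n w)) \<in> gen_subalg q ?G" .
      moreover have "(\<lambda>w. (- inverse q) ^ n * Dn q n w + 1 * ((- 1) * (\<Sum>j\<in>{1..<n}. (- q) ^ j * shuf q (Cn q (n - j)) (Gt j) w) + (- ((- q) ^ n)) * Gt n w)) = Cn q n"
      proof
        fix w
        show "(- inverse q) ^ n * Dn q n w + 1 * ((- 1) * (\<Sum>j\<in>{1..<n}. (- q) ^ j * shuf q (Cn q (n - j)) (Gt j) w) + (- ((- q) ^ n)) * Gt n w) = Cn q n w"
          using C_rec[OF q0 d, of n w] False by (simp add: algebra_simps)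
      qed
      ultimately show ?thesis by simp
    qed
  qed
  have GC: "Dn q n \<in> gen_subalg q ?C \<and> Gt n \<in> gen_subalg q ?C" for n
  proof (induction n rule: less_induct)
    case (less n)
    show ?case
    proof (cases "n = 0")
      case True thus ?thesis by (simp add: Dn0 Gt0 gen_subalg.one)
    next
      case False
      define R where "R = (\<lambda>w. \<Sum>j\<in>{1..<n}. (- q) ^ j * shuf q (Cn q (n - j)) (Gt j) w)"
      define S where "S = (\<lambda>w. \<Sum>i\<in>{1..<n}. 1 * shuf q (Dn q i) (Gt (n - i)) w)"
      define \<kappa> where "\<kappa> = (- inverse q) ^ n + (- q) ^ n"
      have k0: "\<kappa> \<noteq> 0" using kap[of n] False by (simp add: \<kappa>_def)
      have R: "R \<in> gen_subalg q ?C" unfolding R_def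
      proof (rule ga_sum[of "{1..<n}" "\<lambda>j. shuf q (Cn q (n - j)) (Gt j)"])
        fix j assume "j \<in> {1..<n}"
        hence "Cn q (n - j) \<in> gen_subalg q ?C" "Gt j \<in> gen_subalg q ?C"
          using less.IH by (auto intro!: gen_subalg.base)
        thus "shuf q (Cn q (n - j)) (Gt j) \<in> gen_subalg q ?C" by (rule gen_subalg.mult)
      qed simp
      have S: "S \<in> gen_subalg q ?C" unfolding S_def
      proof (rule ga_sum[of "{1..<n}" "\<lambda>i. shuf q (Dn q i) (Gt (n - i))"])
        fix i assume "i \<in> {1..<n}"
        hence "Dn q i \<in> gen_subalg q ?C" "Gt (n - i) \<in> gen_subalg q ?C"
          using less.IH by auto
        thus "shuf q (Dn q i) (Gt (n - i)) \<in> gen_subalg q ?C" by (rule gen_subalg.mult)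
      qed simp
      have "Cn q n \<in> gen_subalg q ?C" using False by (auto intro!: gen_subalg.base)
      from ga_lin[OF this R, of 1 1]
      have H2: "(\<lambda>w. 1 * Cn q n w + 1 * R w) \<in> gen_subalg q ?C" .
      from ga_lin[OF H2 S, of "inverse \<kappa>" "- (inverse \<kappa> * (- q) ^ n)"]
      have H3: "(\<lambda>w. inverse \<kappa> * (1 * Cn q n w + 1 * R w) + (- (inverse \<kappa> * (- q) ^ n)) * S w) \<in> gen_subalg q ?C" .
      have Dn_eq': "Dn q n w = inverse \<kappa> * (1 * Cn q n w + 1 * R w) + (- (inverse \<kappa> * (- q) ^ n)) * S w" for w
      proof -
        have c: "Cn q n w + R w + (- q) ^ n * Gt n w = (- inverse q) ^ n * Dn q n w"
          using C_rec[OF q0 d, of n w] False by (simp add: R_def)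
        have g: "Gt n w = - Dn q n w - S w" using Gt_rec[of n w q] False by (simp add: S_def)
        have "\<kappa> * Dn q n w = Cn q n w + R w - (- q) ^ n * S w"
          using c unfolding g \<kappa>_def by (simp add: algebra_simps)
        hence "Dn q n w = inverse \<kappa> * (Cn q n w + R w - (- q) ^ n * S w)"
          using k0 by (simp add: field_simps)
        thus ?thesis by (simp add: algebra_simps)
      qed
      have "(\<lambda>w. inverse \<kappa> * (1 * Cn q n w + 1 * R w) + (- (inverse \<kappa> * (- q) ^ n)) * S w) = Dn q n"
        by (rule ext, rule Dn_eq'[symmetric])
      with H3 have DC: "Dn q n \<in> gen_subalg q ?C" by simp
      from ga_lin[OF DC S, of "- 1" "- 1"]
      have "(\<lambda>w. (- 1) * Dn q n w + (- 1) * S w) \<in> gen_subalg q ?C" .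
      moreover have "(\<lambda>w. (- 1) * Dn q n w + (- 1) * S w) = Gt n"
        using Gt_rec[of n _ q] False by (auto simp: fun_eq_iff S_def)
      ultimately show ?thesis using DC by simp
    qed
  qed
  have e1: "gen_subalg q ?D = gen_subalg q ?G"
  proof
    show "gen_subalg q ?D \<subseteq> gen_subalg q ?G" by (rule ga_mono) (use DG in blast)
    show "gen_subalg q ?G \<subseteq> gen_subalg q ?D" by (rule ga_mono) (use GD in blast)
  qed
  have e2: "gen_subalg q ?C = gen_subalg q ?G"
  proof
    show "gen_subalg q ?C \<subseteq> gen_subalg q ?G" by (rule ga_mono) (use CG in blast)
    show "gen_subalg q ?G \<subseteq> gen_subalg q ?C" by (rule ga_mono) (use GC in blast)
  qed
  show ?thesis using e1 e2 by simp
qed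



end
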